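(* Let $n\ge3$, $2\le k\le n$, $0<r_1<r_2$, and let $\varphi$ be a function of $\rho>0$ satisfying (a) $\varphi(\rho)>0$; (b) $\varphi(\rho)>1$ for $\rho\le r_1$; (c) $\varphi(\rho)<1$ for $\rho\ge r_2$; (d) $\varphi'(\rho)<0$. Let $e=(1,\dots,1)\in\mathbb{R}^n$. Then the equation \[ \frac{\sigma_k(\kappa(X))}{\sigma_{k-1}(\kappa(X))}-\varphi(|X|)\frac{\sigma_k(e)}{\sigma_{k-1}(e)}\frac{1}{|X|}=0\qquad (X\in M) \] has a unique admissible (star-shaped, $(k-1)$-convex, closed) solution hypersurface $M\subset\mathbb{R}^{n+1}$, namely the sphere $M=\{X:|X|=\rho_0\}$, where $\rho_0$ is the solution of $\varphi(\rho_0)=1$.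
   Context: $\sigma_l$ denotes the $l$-th elementary symmetric polynomial on $\mathbb{R}^n$. $\kappa(X)$ is the vector of principal curvatures of $M$ at $X$ with respect to the outward unit normal $\nu$, via $h_{ij}=-\langle\partial_i\partial_jX,\nu\rangle$ (a sphere of radius $r$ about the origin has curvatures $1/r$). $\Gamma_m=\{\lambda:\sigma_j(\lambda)>0,\ 1\le j\le m\}$; $M$ is $m$-convex if $\kappa(X)\in\Gamma_m$ everywhere. Star-shaped means $M=\{\rho(x)x:x\in\mathbb{S}^n\}$ with $\rho>0$ smooth. *)

theory Defs
  imports "HOL-Analysis.Analysis"
begin

text \<open>Elementary symmetric polynomial sigma_l on R^n, vectors given as nat => real
  with indices 0..n-1.\<close>
definition esym :: "nat \<Rightarrow> nat \<Rightarrow> (nat \<Rightarrow> real) \<Rightarrow> real" where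
  "esym n l lam = (\<Sum>S\<in>{S. S \<subseteq> {..<n} \<and> card S = l}. \<Prod>i\<in>S. lam i)"

definition Gamma_cone :: "nat \<Rightarrow> nat \<Rightarrow> (nat \<Rightarrow> real) set" where
  "Gamma_cone n m = {lam. \<forall>j\<in>{1..m}. esym n j lam > 0}"

definition dirD :: "('a::real_normed_vector \<Rightarrow> real) \<Rightarrow> 'a \<Rightarrow> 'a \<Rightarrow> real" where
  "dirD f u = (\<lambda>y. frechet_derivative f (at y) u)"

fun iter_dirD :: "('a::real_normed_vector \<Rightarrow> real) \<Rightarrow> 'a list \<Rightarrow> 'a \<Rightarrow> real" where
  "iter_dirD f [] = f"
| "iter_dirD f (u # us) = dirD (iter_dirD f us) u"

definition smooth_on :: "'a::real_normed_vector set \<Rightarrow> ('a \<Rightarrow> real) \<Rightarrow> bool" where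
  "smooth_on U f \<longleftrightarrow> (\<forall>us. iter_dirD f us differentiable_on U)"

definition star_hypersurface :: "(real^'m \<Rightarrow> real) \<Rightarrow> (real^'m) set" where
  "star_hypersurface rho = (\<lambda>x. rho x *\<^sub>R x) ` sphere 0 1"

definition radial_ext :: "(real^'m \<Rightarrow> real) \<Rightarrow> real^'m \<Rightarrow> real" where
  "radial_ext rho y = rho (y /\<^sub>R norm y)"

text \<open>Admissible radial functions: positive and smooth on the sphere S^n (smoothness on
  S^n expressed as smoothness of the homogeneous extension on R^(n+1) minus 0).\<close>
definition admissible_radial :: "(real^'m \<Rightarrow> real) \<Rightarrow> bool" where
  "admissible_radial rho \<longleftrightarrow> (\<forall>x\<in>sphere 0 1. rho x > 0) \<and> smooth_on (- {0}) (radial_ext rho)"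

text \<open>Defining function: M = {F = 0}, F increasing outward, so grad F / |grad F| is the
  outward unit normal.\<close>
definition level_fun :: "(real^'m \<Rightarrow> real) \<Rightarrow> real^'m \<Rightarrow> real" where
  "level_fun rho y = norm y - radial_ext rho y"

definition gradient_vec :: "(real^'m \<Rightarrow> real) \<Rightarrow> real^'m \<Rightarrow> real^'m" where
  "gradient_vec F X = (\<chi> i. frechet_derivative F (at X) (axis i 1))"

text \<open>Second fundamental form of the level set {F = 0} at X w.r.t. the outward normal
  nu = grad F/|grad F|: h(u,v) = D^2F(X)(u,v)/|grad F(X)| for tangent u, v
  (equal to -<d_i d_j X, nu> in a parametrisation; a sphere of radius r gets 1/r).\<close>
definition second_ff :: "(real^'m \<Rightarrow> real) \<Rightarrow> real^'m \<Rightarrow> real^'m \<Rightarrow> real^'m \<Rightarrow> real" where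
  "second_ff F X u v = frechet_derivative (dirD F u) (at X) v / norm (gradient_vec F X)"

definition principal_curvatures ::
    "nat \<Rightarrow> (real^'m \<Rightarrow> real) \<Rightarrow> real^'m \<Rightarrow> (nat \<Rightarrow> real) \<Rightarrow> bool" where
  "principal_curvatures n rho X kappa \<longleftrightarrow>
     (\<exists>e :: nat \<Rightarrow> real^'m.
        (\<forall>i<n. \<forall>j<n. inner (e i) (e j) = (if i = j then 1 else 0)) \<and>
        (\<forall>i<n. frechet_derivative (level_fun rho) (at X) (e i) = 0) \<and>
        (\<forall>i<n. \<forall>j<n. second_ff (level_fun rho) X (e i) (e j) = (if i = j then kappa i else 0)))"

definition solves_eq ::
    "nat \<Rightarrow> nat \<Rightarrow> (real \<Rightarrow> real) \<Rightarrow> (real^'m \<Rightarrow> real) \<Rightarrow> bool" where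
  "solves_eq n k phi rho \<longleftrightarrow>
     (\<forall>X\<in>star_hypersurface rho. \<exists>kappa.
        principal_curvatures n rho X kappa \<and> kappa \<in> Gamma_cone n (k - 1) \<and>
        esym n k kappa / esym n (k - 1) kappa
          - phi (norm X) * (esym n k (\<lambda>_. 1) / esym n (k - 1) (\<lambda>_. 1)) * (1 / norm X) = 0)"

end

theory Submission
  imports Defs "HOL-Computational_Algebra.Polynomial"
begin

definition esymS :: "nat set \<Rightarrow> nat \<Rightarrow> (nat \<Rightarrow> real) \<Rightarrow> real" where
  "esymS A l f = (\<Sum>S\<in>{S. S \<subseteq> A \<and> card S = l}. \<Prod>i\<in>S. f i)"

lemma esym_esymS: "esym n l f = esymS {..<n} l f"
  by (simp add: esym_def esymS_def)

lemma esymS_0[simp]: "finite A \<Longrightarrow> esymS A 0 f = 1"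
proof -
  assume "finite A"
  have "{S. S \<subseteq> A \<and> card S = 0} = {{}}" using \<open>finite A\<close> by (auto dest: finite_subset)
  then show ?thesis by (simp add: esymS_def)
qed

lemma esymS_big: "finite A \<Longrightarrow> card A < l \<Longrightarrow> esymS A l f = 0"
proof -
  assume "finite A" "card A < l"
  then have E: "{S. S \<subseteq> A \<and> card S = l} = {}"
  proof (intro equalityI subsetI)
    fix S assume "S \<in> {S. S \<subseteq> A \<and> card S = l}"
    then have "S \<subseteq> A" "card S = l" by auto
    then have "card S \<le> card A" using card_mono[OF \<open>finite A\<close>] by blast
    then show "S \<in> {}" using \<open>card A < l\<close> \<open>card S = l\<close> by simp
  qed simp
  show ?thesis unfolding esymS_def E by simp
qed

lemma esymS_insert:
  assumes "finite A" "a \<notin> A"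
  shows "esymS (insert a A) (Suc l) f = f a * esymS A l f + esymS A (Suc l) f"
proof -
  let ?P1 = "{S. S \<subseteq> insert a A \<and> card S = Suc l \<and> a \<in> S}"
  let ?P2 = "{S. S \<subseteq> A \<and> card S = Suc l}"
  let ?Q = "{S. S \<subseteq> A \<and> card S = l}"
  have split: "{S. S \<subseteq> insert a A \<and> card S = Suc l} = ?P1 \<union> ?P2"
    using assms by auto
  have fin1: "finite ?P1" using assms by (auto intro: finite_subset[of _ "Pow (insert a A)"])
  have fin2: "finite ?P2" using assms by (auto intro: finite_subset[of _ "Pow A"])
  have disj: "?P1 \<inter> ?P2 = {}" using assms by auto
  have bij: "bij_betw (insert a) ?Q ?P1"
  proof (rule bij_betwI[where g="\<lambda>S. S - {a}"])
    show "insert a \<in> ?Q \<rightarrow> ?P1"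
      using assms by (auto simp: card_insert_if finite_subset)
    show "(\<lambda>S. S - {a}) \<in> ?P1 \<rightarrow> ?Q"
      using assms by (auto simp: finite_subset card_Diff_singleton)
    show "\<And>x. x \<in> ?Q \<Longrightarrow> insert a x - {a} = x" using assms by auto
    show "\<And>y. y \<in> ?P1 \<Longrightarrow> insert a (y - {a}) = y" by auto
  qed
  have "(\<Sum>S\<in>?P1. \<Prod>i\<in>S. f i) = (\<Sum>S\<in>?Q. \<Prod>i\<in>insert a S. f i)"
    using sum.reindex_bij_betw[OF bij, of "\<lambda>S. \<Prod>i\<in>S. f i"] by simp
  also have "\<dots> = (\<Sum>S\<in>?Q. f a * (\<Prod>i\<in>S. f i))"
  proof (intro sum.cong refl)
    fix S assume "S \<in> ?Q"
    then have "finite S" "a \<notin> S" using assms finite_subset by auto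
    then show "(\<Prod>i\<in>insert a S. f i) = f a * (\<Prod>i\<in>S. f i)" by simp
  qed
  also have "\<dots> = f a * esymS A l f" by (simp add: esymS_def sum_distrib_left)
  finally have "(\<Sum>S\<in>?P1. \<Prod>i\<in>S. f i) = f a * esymS A l f" .
  moreover have "esymS (insert a A) (Suc l) f = (\<Sum>S\<in>?P1. \<Prod>i\<in>S. f i) + (\<Sum>S\<in>?P2. \<Prod>i\<in>S. f i)"
    unfolding esymS_def split by (rule sum.union_disjoint[OF fin1 fin2 disj])
  ultimately show ?thesis by (simp add: esymS_def)
qed


lemma esymS_insert0:
  assumes "finite A" "a \<notin> A"
  shows "esymS (insert a A) l f = (if l = 0 then 1 else f a * esymS A (l - 1) f + esymS A l f)"
  using esymS_insert[OF assms, of "l - 1" f] assms by (cases l) auto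

definition PA :: "nat set \<Rightarrow> (nat \<Rightarrow> real) \<Rightarrow> real poly" where
  "PA A f = (\<Prod>i\<in>A. [:f i, 1:])"

lemma coeff_PA:
  assumes "finite A"
  shows "coeff (PA A f) j = (if j \<le> card A then esymS A (card A - j) f else 0)"
  using assms
proof (induction A arbitrary: j rule: finite_induct)
  case empty
  then show ?case by (simp add: PA_def)
next
  case (insert a A)
  have PA: "PA (insert a A) f = [:f a, 1:] * PA A f" using insert by (simp add: PA_def)
  show ?case
  proof (cases j)
    case 0
    then show ?thesis using insert by (simp add: PA esymS_insert0 esymS_big)
  next
    case (Suc j')
    have "coeff (PA (insert a A) f) j = f a * coeff (PA A f) j + coeff (PA A f) j'"
      unfolding PA Suc by (simp add: coeff_pCons)
    then show ?thesis using insert Suc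
      by (auto simp: esymS_insert0 esymS_big Suc_diff_le)
  qed
qed

lemma degree_PA: "finite A \<Longrightarrow> degree (PA A f) = card A"
  unfolding PA_def by (subst degree_prod_eq_sum_degree) auto

lemma lead_PA: "finite A \<Longrightarrow> lead_coeff (PA A f) = 1"
  unfolding PA_def by (simp add: lead_coeff_prod)

lemma poly_PA: "poly (PA A f) x = (\<Prod>i\<in>A. f i + x)"
  unfolding PA_def by (simp add: poly_prod)

lemma roots_determine:
  fixes p :: "real poly"
  assumes "finite Z" "degree p = card Z" "\<And>z. z \<in> Z \<Longrightarrow> poly p z = 0"
  shows "p = smult (lead_coeff p) (\<Prod>z\<in>Z. [:-z, 1:])"
  using assms
proof (induction Z arbitrary: p rule: finite_induct)
  case empty
  then have d: "degree p = 0" by simp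
  have "smult (coeff p 0) 1 = [:coeff p 0:]" by (simp add: one_pCons)
  then show ?case using d degree_0_id[OF d] by simp
next
  case (insert z Z)
  have "[:-z, 1:] dvd p" using insert by (simp add: poly_eq_0_iff_dvd)
  then obtain q where q: "p = [:-z, 1:] * q" by blast
  have "p \<noteq> 0" using insert q by (metis card_insert_disjoint degree_0 nat.distinct(1))
  then have "q \<noteq> 0" using q by auto
  have "degree p = degree [:-z, 1:] + degree q"
    unfolding q by (rule degree_mult_eq) (use \<open>q \<noteq> 0\<close> in auto)
  then have dq: "degree q = card Z" using insert by simp
  have "poly q w = 0" if "w \<in> Z" for w
  proof -
    have "poly p w = 0" using insert that by auto
    moreover have "w - z \<noteq> 0" using insert that by auto
    ultimately show ?thesis using q by simp
  qed
  then have "q = smult (lead_coeff q) (\<Prod>z\<in>Z. [:-z, 1:])" using insert dq by blast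
  moreover have "lead_coeff p = lead_coeff [:-z, 1:] * lead_coeff q"
    unfolding q by (rule lead_coeff_mult)
  then have "lead_coeff p = lead_coeff q" by simp
  ultimately show ?case using q insert by (metis mult_smult_right prod.insert)
qed


lemma deriv_step:
  assumes A: "finite A" "card A = Suc m" and inj: "inj_on f A"
  obtains g where "inj_on g {..<m}"
    "\<And>l. l \<le> m \<Longrightarrow> real (Suc m) * esymS {..<m} l g = real (Suc m - l) * esymS A l f"
proof -
  define P where "P = PA A f"
  define R where "R = (\<lambda>i. - f i) ` A"
  have injm: "inj_on (\<lambda>i. - f i) A" using inj by (auto simp: inj_on_def)
  have cR: "card R = Suc m" unfolding R_def using card_image[OF injm] A by simp
  have fR: "finite R" unfolding R_def using A by simp
  define xs where "xs = sorted_list_of_set R"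
  have lxs: "length xs = Suc m" using cR fR by (simp add: xs_def)
  have sxs: "sorted xs" "distinct xs" by (simp_all add: xs_def)
  have setxs: "set xs = R" using fR by (simp add: xs_def)
  have root: "poly P x = 0" if "x \<in> R" for x
  proof -
    from that obtain i where i: "i \<in> A" "x = - f i" unfolding R_def by auto
    show ?thesis unfolding P_def poly_PA using i A by (intro prod_zero) auto
  qed
  have lt: "xs ! l < xs ! Suc l" if "l < m" for l
  proof -
    have "xs ! l \<le> xs ! Suc l" using sxs that lxs by (simp add: sorted_nth_mono)
    moreover have "xs ! l \<noteq> xs ! Suc l" using sxs that lxs by (simp add: nth_eq_iff_index_eq)
    ultimately show ?thesis by simp
  qed
  have "\<exists>z. xs ! l < z \<and> z < xs ! Suc l \<and> poly (pderiv P) z = 0" if lm: "l < m" for l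
  proof -
    have "poly P (xs ! l) = poly P (xs ! Suc l)"
      using root setxs lxs lm by (metis Suc_mono less_SucI nth_mem)
    moreover have "continuous_on {xs ! l..xs ! Suc l} (poly P)"
      using continuous_on_poly[OF continuous_on_id] by simp
    moreover have "\<And>x. poly P differentiable (at x)"
      using poly_DERIV real_differentiable_def by blast
    ultimately obtain z where z: "xs ! l < z" "z < xs ! Suc l" "DERIV (poly P) z :> 0"
      using Rolle[OF lt[OF lm], of "poly P"] by blast
    moreover have "DERIV (poly P) z :> poly (pderiv P) z" by simp
    ultimately show ?thesis using DERIV_unique by metis
  qed
  then have ex: "\<forall>l. \<exists>z. l < m \<longrightarrow> xs ! l < z \<and> z < xs ! Suc l \<and> poly (pderiv P) z = 0"
    by blast
  obtain z where z0: "\<forall>l. l < m \<longrightarrow> xs ! l < z l \<and> z l < xs ! Suc l \<and> poly (pderiv P) (z l) = 0"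
    using choice[OF ex] by blast
  have z: "xs ! l < z l" "z l < xs ! Suc l" "poly (pderiv P) (z l) = 0" if "l < m" for l
    using z0 that by blast+
  have zmono: "z l < z l'" if "l < l'" "l' < m" for l l'
  proof -
    have "xs ! Suc l \<le> xs ! l'" using sxs that lxs by (intro sorted_nth_mono) auto
    moreover have "z l < xs ! Suc l" using z(2)[of l] that by simp
    moreover have "xs ! l' < z l'" using z(1)[of l'] that by simp
    ultimately show ?thesis by linarith
  qed
  have injz: "inj_on z {..<m}"
  proof (rule inj_onI)
    fix a b assume ab: "a \<in> {..<m}" "b \<in> {..<m}" "z a = z b"
    show "a = b"
    proof (rule ccontr)
      assume "a \<noteq> b"
      then have "a < b \<or> b < a" by arith
      then show False using zmono[of a b] zmono[of b a] ab by auto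
    qed
  qed
  define Z where "Z = z ` {..<m}"
  have cZ: "card Z = m" unfolding Z_def using card_image[OF injz] by simp
  have dP: "degree P = Suc m" unfolding P_def using degree_PA A by simp
  have dP': "degree (pderiv P) = card Z" using dP cZ by (simp add: degree_pderiv)
  have rootsZ: "poly (pderiv P) w = 0" if "w \<in> Z" for w
    using that z(3) unfolding Z_def by auto
  have "pderiv P = smult (lead_coeff (pderiv P)) (\<Prod>w\<in>Z. [:-w, 1:])"
    by (rule roots_determine[OF _ dP' rootsZ]) (simp add: Z_def)
  moreover have "lead_coeff (pderiv P) = real (Suc m)"
  proof -
    have "lead_coeff (pderiv P) = coeff (pderiv P) m" using dP' cZ by simp
    also have "\<dots> = real (Suc m) * coeff P (Suc m)" by (simp add: coeff_pderiv)
    also have "coeff P (Suc m) = 1" using lead_PA[OF A(1), of f] dP by (simp add: P_def)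
    finally show ?thesis by simp
  qed
  moreover have "(\<Prod>w\<in>Z. [:-w, 1:]) = PA {..<m} (\<lambda>l. - z l)"
    unfolding Z_def PA_def using prod.reindex[OF injz, of "\<lambda>w. [:-w, 1:]"] by simp
  ultimately have eq: "pderiv P = smult (real (Suc m)) (PA {..<m} (\<lambda>l. - z l))" by simp
  show ?thesis
  proof (rule that[of "\<lambda>l. - z l"])
    show "inj_on (\<lambda>l. - z l) {..<m}" using injz by (auto simp: inj_on_def)
    fix l assume l: "l \<le> m"
    have c1: "coeff (pderiv P) (m - l) = real (Suc (m - l)) * coeff P (Suc (m - l))"
      by (simp only: coeff_pderiv)
    have c2: "coeff P (Suc (m - l)) = esymS A l f"
    proof -
      have "Suc (m - l) \<le> card A" "card A - Suc (m - l) = l" using l A by auto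
      then show ?thesis unfolding P_def coeff_PA[OF A(1)] by simp
    qed
    have c3: "coeff (PA {..<m} (\<lambda>l. - z l)) (m - l) = esymS {..<m} l (\<lambda>l. - z l)"
    proof -
      have "m - l \<le> card {..<m}" "card {..<m} - (m - l) = l" using l by auto
      then show ?thesis unfolding coeff_PA[OF finite_lessThan] by simp
    qed
    have c4: "coeff (pderiv P) (m - l) = real (Suc m) * coeff (PA {..<m} (\<lambda>l. - z l)) (m - l)"
      using eq by (simp only: coeff_smult)
    have c5: "real (Suc (m - l)) = real (Suc m - l)" using l by (simp add: Suc_diff_le)
    show "real (Suc m) * esymS {..<m} l (\<lambda>l. - z l) = real (Suc m - l) * esymS A l f"
      using c1 c2 c3 c4 c5 by simp
  qed
qed

definition EE :: "nat set \<Rightarrow> nat \<Rightarrow> (nat \<Rightarrow> real) \<Rightarrow> real" where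
  "EE A l f = esymS A l f / real (card A choose l)"

lemma iter_step:
  assumes "finite A" "card A = m" "inj_on f A" "r \<le> m"
  shows "\<exists>B g. finite B \<and> card B = m - r \<and> inj_on g B \<and> (\<forall>l \<le> m - r. EE B l g = EE A l f)"
  using assms(4)
proof (induction r)
  case 0
  then show ?case using assms by auto
next
  case (Suc r)
  then obtain B g where B: "finite B" "card B = m - r" "inj_on g B" "\<forall>l \<le> m - r. EE B l g = EE A l f"
    by auto
  define M where "M = m - Suc r"
  have cB: "card B = Suc M" using B Suc.prems by (simp add: M_def)
  obtain g' where g': "inj_on g' {..<M}"
    "\<And>l. l \<le> M \<Longrightarrow> real (Suc M) * esymS {..<M} l g' = real (Suc M - l) * esymS B l g"
    using deriv_step[OF B(1) cB B(3)] by blast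
  have "EE {..<M} l g' = EE A l f" if l: "l \<le> M" for l
  proof -
    have bin: "real (Suc M - l) * real (Suc M choose l) = real (Suc M) * real (M choose l)"
      using binomial_absorb_comp[of "Suc M" l] by (metis diff_Suc_1 of_nat_mult)
    have pos: "real (M choose l) > 0" using l by simp
    have "EE {..<M} l g' = esymS {..<M} l g' / real (M choose l)" by (simp add: EE_def)
    also have "\<dots> = real (Suc M - l) * esymS B l g / (real (Suc M) * real (M choose l))"
    proof -
      have "esymS {..<M} l g' = real (Suc M - l) * esymS B l g / real (Suc M)"
        using g'(2)[OF l] by (simp add: eq_divide_eq mult.commute del: of_nat_Suc)
      then show ?thesis by simp
    qed
    also have "\<dots> = real (Suc M - l) * esymS B l g / (real (Suc M - l) * real (Suc M choose l))"
      by (simp only: bin)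
    also have "\<dots> = esymS B l g / real (Suc M choose l)"
      using l by (intro mult_divide_mult_cancel_left) simp
    also have "\<dots> = EE B l g" using cB by (simp add: EE_def)
    also have "\<dots> = EE A l f" using B(4) l cB M_def Suc.prems by auto
    finally show ?thesis .
  qed
  then show ?case using g' unfolding M_def by (intro exI[of _ "{..<m - Suc r}"] exI[of _ g']) auto
qed

lemma esymS_card:
  assumes "finite B" shows "esymS B (card B) g = (\<Prod>i\<in>B. g i)"
proof -
  have "{S. S \<subseteq> B \<and> card S = card B} = {B}" using assms card_subset_eq by blast
  then show ?thesis by (simp add: esymS_def)
qed

lemma esymS_reverse:
  assumes B: "finite B" and nz: "\<And>i. i \<in> B \<Longrightarrow> g i \<noteq> 0" and l: "l \<le> card B"
  shows "esymS B l (\<lambda>i. 1 / g i) * (\<Prod>i\<in>B. g i) = esymS B (card B - l) g"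
proof -
  let ?P = "{S. S \<subseteq> B \<and> card S = l}" and ?Q = "{S. S \<subseteq> B \<and> card S = card B - l}"
  have bij: "bij_betw (\<lambda>S. B - S) ?P ?Q"
  proof (rule bij_betwI[where g="\<lambda>S. B - S"])
    show "(\<lambda>S. B - S) \<in> ?P \<rightarrow> ?Q" using B by (auto simp: card_Diff_subset finite_subset)
    show "(\<lambda>S. B - S) \<in> ?Q \<rightarrow> ?P" using B l
      by (auto simp: card_Diff_subset finite_subset)
  qed auto
  have "esymS B l (\<lambda>i. 1 / g i) * (\<Prod>i\<in>B. g i) = (\<Sum>S\<in>?P. (\<Prod>i\<in>S. 1 / g i) * (\<Prod>i\<in>B. g i))"
    by (simp add: esymS_def sum_distrib_right)
  also have "\<dots> = (\<Sum>S\<in>?P. \<Prod>i\<in>B - S. g i)"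
  proof (rule sum.cong[OF refl])
    fix S assume S: "S \<in> ?P"
    then have "(\<Prod>i\<in>B. g i) = (\<Prod>i\<in>S. g i) * (\<Prod>i\<in>B - S. g i)"
      using B by (metis (no_types, lifting) mem_Collect_eq prod.subset_diff mult.commute)
    moreover have "(\<Prod>i\<in>S. 1 / g i) * (\<Prod>i\<in>S. g i) = 1"
      using S nz by (simp add: prod_dividef[symmetric] prod.distrib[symmetric] subset_iff) 
    ultimately show "(\<Prod>i\<in>S. 1 / g i) * (\<Prod>i\<in>B. g i) = (\<Prod>i\<in>B - S. g i)"
      by (metis (no_types, lifting) mult.assoc mult_1)
  qed
  also have "\<dots> = (\<Sum>S\<in>?Q. \<Prod>i\<in>S. g i)"
    using sum.reindex_bij_betw[OF bij, of "\<lambda>S. \<Prod>i\<in>S. g i"] by simp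
  finally show ?thesis by (simp add: esymS_def)
qed


lemma EE_0[simp]: "finite A \<Longrightarrow> EE A 0 f = 1"
  by (simp add: EE_def)

lemma newton2:
  assumes "finite B" "card B = 2"
  shows "EE B 0 h * EE B 2 h \<le> (EE B 1 h)\<^sup>2"
proof -
  obtain a b where ab: "B = {a, b}" "a \<noteq> b" using assms by (auto simp: card_Suc_eq numeral_2_eq_2)
  have e1: "esymS B 1 h = h a + h b" unfolding ab using ab
    by (simp add: esymS_insert0 esymS_big)
  have e2: "esymS B 2 h = h a * h b" unfolding ab using ab
    by (simp add: esymS_insert0 esymS_big numeral_2_eq_2)
  have x1: "EE B 0 h * EE B 2 h = h a * h b" using assms e2 by (simp add: EE_def)
  have x2: "EE B 1 h = (h a + h b) / 2" using assms e1 by (simp add: EE_def)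
  have "h a * h b \<le> ((h a + h b) / 2)\<^sup>2"
  proof -
    have "((h a + h b) / 2)\<^sup>2 - h a * h b = ((h a - h b) / 2)\<^sup>2"
      by (simp add: power2_eq_square field_simps)
    moreover have "0 \<le> ((h a - h b) / 2)\<^sup>2" by simp
    ultimately show ?thesis by linarith
  qed
  then show ?thesis unfolding x1 x2 .
qed

lemma newton_distinct:
  assumes A: "finite A" "inj_on f A" and j: "1 \<le> j" "j < card A"
  shows "EE A (j - 1) f * EE A (Suc j) f \<le> (EE A j f)\<^sup>2"
proof -
  obtain B g where B: "finite B" "card B = Suc j" "inj_on g B"
      "\<forall>l \<le> Suc j. EE B l g = EE A l f"
    using iter_step[OF A(1) refl A(2), of "card A - Suc j"] j by auto
  have PB: "EE B (Suc j) g = (\<Prod>i\<in>B. g i)"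
    using esymS_card[OF B(1), of g] B(2) by (simp add: EE_def)
  have "EE B (j - 1) g * EE B (Suc j) g \<le> (EE B j g)\<^sup>2"
  proof (cases "\<exists>b\<in>B. g b = 0")
    case True
    then have "EE B (Suc j) g = 0" using PB B(1) by simp
    then show ?thesis by simp
  next
    case False
    define P where "P = (\<Prod>i\<in>B. g i)"
    have P0: "P \<noteq> 0" using False B(1) by (simp add: P_def)
    define h where "h = (\<lambda>i. 1 / g i)"
    have injh: "inj_on h B" using B(3) False unfolding h_def by (auto simp: inj_on_def)
    have rel: "EE B l h = EE B (Suc j - l) g / P" if l: "l \<le> Suc j" for l
    proof -
      have "esymS B l h * P = esymS B (Suc j - l) g"
        using esymS_reverse[OF B(1), of g l] False l B(2) by (simp add: h_def P_def)
      moreover have "real (Suc j choose l) = real (Suc j choose (Suc j - l))"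
        using binomial_symmetric[OF l] by simp
      ultimately show ?thesis using P0 B(2) unfolding EE_def
        by (simp add: field_simps)
    qed
    have c2: "Suc j - (j - 1) = 2" "j - 1 \<le> Suc j" using j by auto
    obtain B' h' where B': "finite B'" "card B' = 2" "inj_on h' B'"
        "\<forall>l \<le> 2. EE B' l h' = EE B l h"
      using iter_step[OF B(1) B(2) injh c2(2)] unfolding c2(1) by blast
    have "EE B' 0 h' * EE B' 2 h' \<le> (EE B' 1 h')\<^sup>2" by (rule newton2[OF B'(1,2)])
    then have "EE B 0 h * EE B 2 h \<le> (EE B 1 h)\<^sup>2" using B'(4) by simp
    moreover have "EE B 0 h = 1" using B(1) by simp
    moreover have "EE B 2 h = EE B (j - 1) g / P" using rel[of 2] j by (simp add: numeral_2_eq_2)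
    moreover have "EE B 1 h = EE B j g / P" using rel[of 1] by simp
    ultimately have "EE B (j - 1) g / P \<le> (EE B j g / P)\<^sup>2" by simp
    then have "EE B (j - 1) g / P * P\<^sup>2 \<le> (EE B j g / P)\<^sup>2 * P\<^sup>2"
      by (rule mult_right_mono) simp
    then have "EE B (j - 1) g * P \<le> (EE B j g)\<^sup>2"
      using P0 by (simp add: power2_eq_square field_simps)
    then show ?thesis using PB P_def by simp
  qed
  then show ?thesis using B(4) by simp
qed


lemma binom_logconcave:
  assumes "1 \<le> j" "j < m"
  shows "real (m choose (j - 1)) * real (m choose Suc j) \<le> (real (m choose j))\<^sup>2"
proof -
  obtain i where i: "j = Suc i" using assms by (cases j) auto
  have r1: "Suc j * (m choose Suc j) = (m - j) * (m choose j)"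
    using binomial_absorption[of j m] binomial_absorb_comp[of m j] by simp
  have r2: "Suc i * (m choose Suc i) = (m - i) * (m choose i)"
    using binomial_absorption[of i m] binomial_absorb_comp[of m i] by simp
  define a where "a = real (m choose i) * real (m choose Suc j)"
  define c where "c = real (m choose j)"
  have "a * (real (m - i) * real (Suc j)) = c\<^sup>2 * (real (Suc i) * real (m - j))"
  proof -
    have "a * (real (m - i) * real (Suc j)) = (real (m - i) * real (m choose i)) * (real (Suc j) * real (m choose Suc j))"
      by (simp add: a_def algebra_simps)
    also have "\<dots> = (real (Suc i) * c) * (real (m - j) * c)"
      using r1 r2 i unfolding c_def by (metis of_nat_mult)
    finally show ?thesis by (simp add: power2_eq_square algebra_simps)
  qed
  moreover have "real (Suc i) * real (m - j) \<le> real (m - i) * real (Suc j)"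
    using assms i by (simp add: of_nat_diff algebra_simps)
  moreover have "real (m - i) * real (Suc j) > 0" using assms i by simp
  ultimately have "a * (real (m - i) * real (Suc j)) \<le> c\<^sup>2 * (real (m - i) * real (Suc j))"
    by (metis mult_left_mono zero_le_power2)
  then have "a \<le> c\<^sup>2" using mult_right_le_imp_le \<open>real (m - i) * real (Suc j) > 0\<close> by blast
  then show ?thesis using i by (simp add: a_def c_def)
qed

lemma newton_weak_inj:
  assumes A: "finite A" "inj_on f A" and j: "1 \<le> j"
  shows "esymS A (j - 1) f * esymS A (Suc j) f \<le> (esymS A j f)\<^sup>2"
proof (cases "j < card A")
  case False
  then have "esymS A (Suc j) f = 0" using A by (intro esymS_big) auto
  then show ?thesis by simp
next
  case True
  define m where "m = card A"
  have Cpos: "real (m choose l) > 0" if "l \<le> m" for l using that by simp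
  have s: "esymS A l f = real (m choose l) * EE A l f" if "l \<le> m" for l
    using Cpos[OF that] by (simp add: EE_def m_def)
  have jm: "j < m" using True m_def by simp
  define Q where "Q = EE A (j - 1) f * EE A (Suc j) f"
  have N: "Q \<le> (EE A j f)\<^sup>2" using newton_distinct[OF A j True] by (simp add: Q_def)
  have L: "esymS A (j - 1) f * esymS A (Suc j) f = real (m choose (j - 1)) * real (m choose Suc j) * Q"
    using s[of "j - 1"] s[of "Suc j"] jm by (simp add: Q_def algebra_simps)
  have R: "(esymS A j f)\<^sup>2 = (real (m choose j))\<^sup>2 * (EE A j f)\<^sup>2"
    using s[of j] jm by (simp add: power_mult_distrib)
  have B: "real (m choose (j - 1)) * real (m choose Suc j) \<le> (real (m choose j))\<^sup>2"
    by (rule binom_logconcave[OF j jm])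
  show ?thesis
  proof (cases "Q \<le> 0")
    case True
    have "real (m choose (j - 1)) * real (m choose Suc j) * Q \<le> 0"
      using True by (simp add: mult_nonneg_nonpos)
    then show ?thesis unfolding L R by (meson order_trans zero_le_mult_iff zero_le_power2)
  next
    case False
    have "real (m choose (j - 1)) * real (m choose Suc j) * Q \<le> (real (m choose j))\<^sup>2 * Q"
      using B False by (intro mult_right_mono) auto
    also have "\<dots> \<le> (real (m choose j))\<^sup>2 * (EE A j f)\<^sup>2"
      using N by (intro mult_left_mono) auto
    finally show ?thesis unfolding L R .
  qed
qed

lemma newton_weak:
  assumes A: "finite A" and j: "1 \<le> j"
  shows "esymS A (j - 1) f * esymS A (Suc j) f \<le> (esymS A j f)\<^sup>2"
proof (rule ccontr)
  define ft where "ft = (\<lambda>t i. f i + t * real i)"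
  define F where "F = (\<lambda>t. (esymS A j (ft t))\<^sup>2 - esymS A (j - 1) (ft t) * esymS A (Suc j) (ft t))"
  assume "\<not> ?thesis"
  then have F0: "F 0 < 0" by (simp add: F_def ft_def)
  have cont: "isCont F 0"
    unfolding F_def ft_def esymS_def by (intro continuous_intros)
  have "eventually (\<lambda>t. F t < 0) (at 0)"
    using order_tendstoD(2)[OF cont[unfolded isCont_def] F0] .
  then obtain d where d: "d > 0" "\<And>t. t \<noteq> 0 \<Longrightarrow> dist t 0 < d \<Longrightarrow> F t < 0"
    unfolding eventually_at by blast
  define T where "T = (\<lambda>(a, b). (f b - f a) / (real a - real b)) ` (A \<times> A)"
  have fT: "finite T" unfolding T_def using A by simp
  have "infinite ({0<..<d} :: real set)" using d by simp
  then obtain t where t: "t \<in> {0<..<d}" "t \<notin> T"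
    using fT by (meson finite_subset subsetI)
  have "inj_on (ft t) A"
  proof (rule inj_onI)
    fix a b assume ab: "a \<in> A" "b \<in> A" "ft t a = ft t b"
    show "a = b"
    proof (rule ccontr)
      assume "a \<noteq> b"
      then have ne: "real a - real b \<noteq> 0" by simp
      from ab have "t * (real a - real b) = f b - f a" by (simp add: ft_def algebra_simps)
      then have "t = (f b - f a) / (real a - real b)" using ne by (simp add: eq_divide_eq)
      then have "t \<in> T" unfolding T_def using ab by force
      then show False using t by simp
    qed
  qed
  then have "F t \<ge> 0" using newton_weak_inj[OF A _ j] by (simp add: F_def)
  moreover have "F t < 0" using d t by auto
  ultimately show False by simp
qed


lemma esymS_empty[simp]: "esymS {} l f = (if l = 0 then 1 else 0)"
  by (simp add: esymS_big)

lemma insert_Diff_swap: "i \<noteq> a \<Longrightarrow> insert a A - {i} = insert a (A - {i})"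
  by auto

lemma ident1:
  assumes "finite A"
  shows "(\<Sum>i\<in>A. esymS (A - {i}) l f) = (real (card A) - real l) * esymS A l f"
  using assms
proof (induction A arbitrary: l rule: finite_induct)
  case empty
  then show ?case by simp
next
  case (insert a A)
  have s: "(\<Sum>i\<in>insert a A. esymS (insert a A - {i}) l f)
      = esymS A l f + (\<Sum>i\<in>A. esymS (insert a (A - {i})) l f)"
  proof -
    have "(\<Sum>i\<in>insert a A. esymS (insert a A - {i}) l f)
        = esymS (insert a A - {a}) l f + (\<Sum>i\<in>A. esymS (insert a A - {i}) l f)"
      by (rule sum.insert[OF insert.hyps(1,2)])
    moreover have "insert a A - {a} = A" using insert by auto
    moreover have "(\<Sum>i\<in>A. esymS (insert a A - {i}) l f) = (\<Sum>i\<in>A. esymS (insert a (A - {i})) l f)"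
      using insert by (intro sum.cong refl) (metis insert_Diff_swap)
    ultimately show ?thesis by simp
  qed
  show ?case
  proof (cases l)
    case 0
    then show ?thesis using insert by simp
  next
    case (Suc l')
    have "(\<Sum>i\<in>A. esymS (insert a (A - {i})) l f)
        = (\<Sum>i\<in>A. f a * esymS (A - {i}) l' f + esymS (A - {i}) l f)"
      using insert Suc by (intro sum.cong refl) (simp add: esymS_insert)
    also have "\<dots> = f a * (\<Sum>i\<in>A. esymS (A - {i}) l' f) + (\<Sum>i\<in>A. esymS (A - {i}) l f)"
      by (simp add: sum.distrib sum_distrib_left)
    also have "\<dots> = f a * ((real (card A) - real l') * esymS A l' f) + (real (card A) - real l) * esymS A l f"
      using insert.IH by simp
    finally have x: "(\<Sum>i\<in>A. esymS (insert a (A - {i})) l f) = \<dots>" .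
    have y: "esymS (insert a A) l f = f a * esymS A l' f + esymS A l f"
      using insert Suc by (simp add: esymS_insert)
    show ?thesis unfolding s x y using insert Suc by (simp add: algebra_simps)
  qed
qed

lemma ident2:
  assumes "finite A"
  shows "(\<Sum>i\<in>A. f i * esymS (A - {i}) l f) = real (Suc l) * esymS A (Suc l) f"
  using assms
proof (induction A arbitrary: l rule: finite_induct)
  case empty
  then show ?case by simp
next
  case (insert a A)
  have s: "(\<Sum>i\<in>insert a A. f i * esymS (insert a A - {i}) l f)
      = f a * esymS A l f + (\<Sum>i\<in>A. f i * esymS (insert a (A - {i})) l f)"
  proof -
    have "(\<Sum>i\<in>insert a A. f i * esymS (insert a A - {i}) l f)
        = f a * esymS (insert a A - {a}) l f + (\<Sum>i\<in>A. f i * esymS (insert a A - {i}) l f)"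
      by (rule sum.insert[OF insert.hyps(1,2)])
    moreover have "insert a A - {a} = A" using insert by auto
    moreover have "(\<Sum>i\<in>A. f i * esymS (insert a A - {i}) l f) = (\<Sum>i\<in>A. f i * esymS (insert a (A - {i})) l f)"
      using insert by (intro sum.cong refl) (metis insert_Diff_swap)
    ultimately show ?thesis by simp
  qed
  have y: "esymS (insert a A) (Suc l) f = f a * esymS A l f + esymS A (Suc l) f"
    using insert by (simp add: esymS_insert)
  show ?case
  proof (cases l)
    case 0
    have "(\<Sum>i\<in>A. f i * esymS (insert a (A - {i})) l f) = (\<Sum>i\<in>A. f i * esymS (A - {i}) l f)"
      using insert 0 by simp
    then show ?thesis unfolding s y using insert.IH[of 0] insert 0 by simp
  next
    case (Suc l')
    have "(\<Sum>i\<in>A. f i * esymS (insert a (A - {i})) l f)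
        = (\<Sum>i\<in>A. f a * (f i * esymS (A - {i}) l' f) + f i * esymS (A - {i}) l f)"
      using insert Suc by (intro sum.cong refl) (simp add: esymS_insert algebra_simps)
    also have "\<dots> = f a * (\<Sum>i\<in>A. f i * esymS (A - {i}) l' f) + (\<Sum>i\<in>A. f i * esymS (A - {i}) l f)"
      by (simp add: sum.distrib sum_distrib_left)
    also have "\<dots> = f a * (real l * esymS A l f) + real (Suc l) * esymS A (Suc l) f"
      using insert.IH Suc by simp
    finally have x: "(\<Sum>i\<in>A. f i * esymS (insert a (A - {i})) l f) = \<dots>" .
    show ?thesis unfolding s x y by (simp add: algebra_simps)
  qed
qed

lemma cone_lemma:
  assumes A: "finite A" "i \<in> A"
  shows "(\<forall>j. 1 \<le> j \<and> j \<le> k \<longrightarrow> esymS A j f > 0) \<Longrightarrow> (\<forall>j. 1 \<le> j \<and> j < k \<longrightarrow> esymS (A - {i}) j f > 0)"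
proof (induction k)
  case 0
  then show ?case by simp
next
  case (Suc k)
  define A' where "A' = A - {i}"
  have fA': "finite A'" "i \<notin> A'" and AA: "A = insert i A'" using A by (auto simp: A'_def)
  have IH: "\<forall>j. 1 \<le> j \<and> j < k \<longrightarrow> esymS A' j f > 0" using Suc by (simp add: A'_def)
  show ?case
  proof (cases "k = 0")
    case True
    then show ?thesis by simp
  next
    case False
    have km1: "esymS A' (k - 1) f > 0"
    proof (cases "k - 1 = 0")
      case True then show ?thesis using fA' by simp
    next
      case False then show ?thesis using IH by simp
    qed
    have sk: "esymS A k f > 0" "esymS A (Suc k) f > 0" using Suc.prems False by auto
    have e1: "esymS A k f = f i * esymS A' (k - 1) f + esymS A' k f"
      using esymS_insert[OF fA', of "k - 1" f] False AA by simp
    have e2: "esymS A (Suc k) f = f i * esymS A' k f + esymS A' (Suc k) f"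
      using esymS_insert[OF fA', of k f] AA by simp
    have "esymS A' k f > 0"
    proof (rule ccontr)
      assume neg: "\<not> ?thesis"
      define a where "a = esymS A' (k - 1) f"
      define b where "b = - esymS A' k f"
      define c where "c = esymS A' (Suc k) f"
      define x where "x = f i"
      have a: "a > 0" using km1 a_def by simp
      have b0: "b \<ge> 0" using neg b_def by simp
      have h1: "x * a > b" using sk(1) e1 unfolding a_def b_def x_def by simp
      have h2: "c > x * b" using sk(2) e2 unfolding c_def b_def x_def by simp
      have N: "a * c \<le> b\<^sup>2" using newton_weak[OF fA'(1), of k f] False
        unfolding a_def b_def c_def by simp
      have x0: "x > 0"
      proof (rule ccontr)
        assume "\<not> x > 0"
        then have "x * a \<le> 0" using a by (simp add: mult_nonpos_nonneg)
        then show False using h1 b0 by linarith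
      qed
      have "x * b \<ge> 0" using x0 b0 by simp
      then have c0: "c > 0" using h2 by linarith
      have "a * c > 0" using a c0 by simp
      then have "b\<^sup>2 > 0" using N by linarith
      then have "b \<noteq> 0" by auto
      then have "b > 0" using b0 by simp
      have "b * b < x * a * b" using h1 \<open>b > 0\<close> by (simp add: mult_strict_right_mono)
      also have "x * a * b = a * (x * b)" by (simp add: algebra_simps)
      also have "\<dots> < a * c" using h2 a by simp
      finally show False using N by (simp add: power2_eq_square)
    qed
    then show ?thesis using IH by (auto simp: A'_def less_Suc_eq)
  qed
qed

lemma esymS_nonneg:
  assumes "\<And>i. i \<in> A \<Longrightarrow> f i \<ge> 0"
  shows "esymS A l f \<ge> 0"
  unfolding esymS_def using assms by (intro sum_nonneg prod_nonneg) auto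

lemma min_ineq:
  assumes A: "finite A" and k: "1 \<le> k" and G: "\<forall>j. 1 \<le> j \<and> j \<le> k \<longrightarrow> esymS A j f > 0"
    and le: "\<And>i. i \<in> A \<Longrightarrow> f i \<le> c"
  shows "real k * esymS A k f \<le> c * ((real (card A) - real (k - 1)) * esymS A (k - 1) f)"
proof -
  have nn: "esymS (A - {i}) (k - 1) f \<ge> 0" if "i \<in> A" for i
  proof (cases "k - 1 = 0")
    case True then show ?thesis using A by simp
  next
    case False
    then have "1 \<le> k - 1 \<and> k - 1 < k" using k by auto
    with cone_lemma[OF A that G] show ?thesis by (meson less_imp_le)
  qed
  have "real k * esymS A k f = (\<Sum>i\<in>A. f i * esymS (A - {i}) (k - 1) f)"
    using ident2[OF A, of f "k - 1"] k by simp
  also have "\<dots> \<le> (\<Sum>i\<in>A. c * esymS (A - {i}) (k - 1) f)"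
    using nn le by (intro sum_mono mult_right_mono) auto
  also have "\<dots> = c * ((real (card A) - real (k - 1)) * esymS A (k - 1) f)"
    using ident1[OF A, of "k - 1" f] by (simp add: sum_distrib_left[symmetric])
  finally show ?thesis .
qed

lemma max_ineq:
  assumes A: "finite A" and k: "1 \<le> k" and c: "c > 0"
    and ge: "\<And>i. i \<in> A \<Longrightarrow> f i \<ge> c"
  shows "real k * esymS A k f \<ge> c * ((real (card A) - real (k - 1)) * esymS A (k - 1) f)"
proof -
  have nn: "esymS (A - {i}) (k - 1) f \<ge> 0" for i
    using ge c by (intro esymS_nonneg) (meson DiffD1 less_le_trans less_imp_le)
  have "c * ((real (card A) - real (k - 1)) * esymS A (k - 1) f) = (\<Sum>i\<in>A. c * esymS (A - {i}) (k - 1) f)"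
    using ident1[OF A, of "k - 1" f] by (simp add: sum_distrib_left[symmetric])
  also have "\<dots> \<le> (\<Sum>i\<in>A. f i * esymS (A - {i}) (k - 1) f)"
    using nn ge by (intro sum_mono mult_right_mono) auto
  also have "\<dots> = real k * esymS A k f"
    using ident2[OF A, of f "k - 1"] k by simp
  finally show ?thesis .
qed

lemma norm_has_deriv:
  fixes X :: "'a::real_inner"
  assumes "X \<noteq> 0"
  shows "(norm has_derivative (\<lambda>h. (X \<bullet> h) / norm X)) (at X)"
proof -
  have "(\<lambda>h. h \<bullet> sgn X) = (\<lambda>h. (X \<bullet> h) / norm X)"
    by (auto simp: sgn_div_norm inner_commute divide_inverse)
  then show ?thesis using has_derivative_norm[OF assms] by simp
qed

lemma dirD_norm:
  fixes y :: "'a::real_inner"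
  assumes "y \<noteq> 0"
  shows "dirD norm u y = (y \<bullet> u) / norm y"
  unfolding dirD_def using frechet_derivative_at[OF norm_has_deriv[OF assms]] by metis

lemma D2_norm:
  fixes X :: "'a::real_inner"
  assumes X: "X \<noteq> 0" and u: "X \<bullet> u = 0"
  shows "frechet_derivative (dirD norm u) (at X) v = (u \<bullet> v) / norm X"
proof -
  have d1: "((\<lambda>y. y \<bullet> u) has_derivative (\<lambda>h. h \<bullet> u)) (at X)"
    by (rule bounded_linear_imp_has_derivative) (rule bounded_linear_inner_left)
  have "((\<lambda>y. (y \<bullet> u) / norm y) has_derivative
      (\<lambda>h. - (X \<bullet> u) * (inverse (norm X) * ((X \<bullet> h) / norm X) * inverse (norm X)) + (h \<bullet> u) / norm X)) (at X)"
    using has_derivative_divide[OF d1 norm_has_deriv[OF X]] X by simp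
  then have d2: "((\<lambda>y. (y \<bullet> u) / norm y) has_derivative (\<lambda>h. (h \<bullet> u) / norm X)) (at X)"
    using u by simp
  have "(dirD norm u has_derivative (\<lambda>h. (h \<bullet> u) / norm X)) (at X)"
    by (rule has_derivative_transform_within_open[OF d2, of "- {0}"]) (use X in \<open>auto simp: dirD_norm\<close>)
  then show ?thesis using frechet_derivative_at by (metis inner_commute)
qed

lemma smooth_diff_at:
  fixes f :: "'a::real_normed_vector \<Rightarrow> real"
  assumes "smooth_on (- {0}) f" "y \<noteq> 0"
  shows "f differentiable (at y)"
proof -
  have "iter_dirD f [] differentiable_on (- {0})" using assms(1) unfolding smooth_on_def by blast
  then have "iter_dirD f [] differentiable (at y within - {0})"
    using assms(2) unfolding differentiable_on_def by simp
  moreover have "at y within - {0} = at y" using assms(2) by (intro at_within_open) auto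
  ultimately show ?thesis by simp
qed

lemma smooth_dirD_diff_at:
  fixes f :: "'a::real_normed_vector \<Rightarrow> real"
  assumes "smooth_on (- {0}) f" "y \<noteq> 0"
  shows "dirD f u differentiable (at y)"
proof -
  have "iter_dirD f [u] differentiable_on (- {0})" using assms(1) unfolding smooth_on_def by blast
  then have "iter_dirD f [u] differentiable (at y within - {0})"
    using assms(2) unfolding differentiable_on_def by simp
  moreover have "at y within - {0} = at y" using assms(2) by (intro at_within_open) auto
  ultimately show ?thesis by simp
qed

lemma sff_formula:
  fixes X :: "real^'m" and rho :: "real^'m \<Rightarrow> real"
  assumes sm: "smooth_on (- {0}) (radial_ext rho)" and X: "X \<noteq> 0"
    and D0: "frechet_derivative (radial_ext rho) (at X) = (\<lambda>h. 0)"
  shows "frechet_derivative (level_fun rho) (at X) h = (X \<bullet> h) / norm X"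
    and "norm (gradient_vec (level_fun rho) X) = 1"
    and "X \<bullet> u = 0 \<Longrightarrow> second_ff (level_fun rho) X u v
            = (u \<bullet> v) / norm X - frechet_derivative (dirD (radial_ext rho) u) (at X) v"
proof -
  define R where "R = radial_ext rho"
  have L: "level_fun rho = (\<lambda>y. norm y - R y)" by (simp add: level_fun_def R_def fun_eq_iff)
  have dR: "(R has_derivative frechet_derivative R (at y)) (at y)" if "y \<noteq> 0" for y
    using smooth_diff_at[OF sm that] frechet_derivative_works unfolding R_def by blast
  have dL: "(level_fun rho has_derivative (\<lambda>h. (y \<bullet> h) / norm y - frechet_derivative R (at y) h)) (at y)"
    if "y \<noteq> 0" for y
    unfolding L by (rule has_derivative_diff[OF norm_has_deriv[OF that] dR[OF that]])
  have fL: "frechet_derivative (level_fun rho) (at y) h = (y \<bullet> h) / norm y - frechet_derivative R (at y) h"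
    if "y \<noteq> 0" for y h
    using frechet_derivative_at[OF dL[OF that]] by metis
  show fLX: "frechet_derivative (level_fun rho) (at X) h = (X \<bullet> h) / norm X" for h
    using fL[OF X] D0 by (simp add: R_def)
  have "gradient_vec (level_fun rho) X = X /\<^sub>R norm X"
    unfolding gradient_vec_def fLX by (simp add: vec_eq_iff inner_axis divide_inverse)
  then show gn: "norm (gradient_vec (level_fun rho) X) = 1" using X by simp
  assume u: "X \<bullet> u = 0"
  have eqD: "dirD (level_fun rho) u y = dirD norm u y - dirD R u y" if "y \<in> - {0}" for y
    using fL[of y u] dirD_norm[of y u] that unfolding dirD_def by simp
  have d1: "(dirD norm u has_derivative frechet_derivative (dirD norm u) (at X)) (at X)"
  proof -
    have d1': "((\<lambda>y. y \<bullet> u) has_derivative (\<lambda>h. h \<bullet> u)) (at X)"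
      by (rule bounded_linear_imp_has_derivative) (rule bounded_linear_inner_left)
    obtain D' where d2: "((\<lambda>y. (y \<bullet> u) / norm y) has_derivative D') (at X)"
      using has_derivative_divide[OF d1' norm_has_deriv[OF X]] X by auto
    have "(dirD norm u has_derivative D') (at X)"
      by (rule has_derivative_transform_within_open[OF d2, of "- {0}"]) (use X in \<open>auto simp: dirD_norm\<close>)
    then have "dirD norm u differentiable (at X)" unfolding differentiable_def by blast
    then show ?thesis using frechet_derivative_works by blast
  qed
  have d3: "(dirD R u has_derivative frechet_derivative (dirD R u) (at X)) (at X)"
    using smooth_dirD_diff_at[OF sm X] frechet_derivative_works unfolding R_def by blast
  have "(dirD (level_fun rho) u has_derivative
      (\<lambda>v. frechet_derivative (dirD norm u) (at X) v - frechet_derivative (dirD R u) (at X) v)) (at X)"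
    by (rule has_derivative_transform_within_open[OF has_derivative_diff[OF d1 d3], of "- {0}"])
      (use X eqD in auto)
  from fun_cong[OF frechet_derivative_at[OF this], of v]
  have "frechet_derivative (dirD (level_fun rho) u) (at X) v
      = frechet_derivative (dirD norm u) (at X) v - frechet_derivative (dirD R u) (at X) v"
    by simp
  then show "second_ff (level_fun rho) X u v
            = (u \<bullet> v) / norm X - frechet_derivative (dirD (radial_ext rho) u) (at X) v"
    unfolding second_ff_def gn using D2_norm[OF X u] by (simp add: R_def)
qed


lemma deriv_scale:
  assumes "(g has_derivative D) F"
  shows "D (c *\<^sub>R x) = c * D x"
proof -
  have "linear D" using has_derivative_bounded_linear[OF assms] bounded_linear.linear by blast
  then show ?thesis using linear_scale[of D c x] by simp
qed

lemma second_order: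
  fixes f :: "'a::real_normed_vector \<Rightarrow> real"
  assumes sm: "smooth_on (- {0}) f" and X: "X \<noteq> 0" and s0: "s \<noteq> 0"
    and ext: "\<And>y. y \<noteq> 0 \<Longrightarrow> s * f y \<le> s * f X"
  shows "frechet_derivative f (at X) = (\<lambda>h. 0)"
    and "s * frechet_derivative (dirD f u) (at X) u \<le> 0"
proof -
  have dF: "(f has_derivative frechet_derivative f (at y)) (at y)" if "y \<noteq> 0" for y
    using smooth_diff_at[OF sm that] frechet_derivative_works by blast
  have "(\<forall>y\<in>- {0}. f y \<le> f X) \<or> (\<forall>y\<in>- {0}. f X \<le> f y)"
  proof (cases "s \<ge> 0")
    case True
    then have "s > 0" using s0 by simp
    then show ?thesis using ext by (simp add: mult_le_cancel_left)
  next
    case False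
    then show ?thesis using ext by (simp add: mult_le_cancel_left)
  qed
  then show D0: "frechet_derivative f (at X) = (\<lambda>h. 0)"
    using differential_zero_maxmin[of X "- {0}" f "frechet_derivative f (at X)"] dF[OF X] X by auto
  show "s * frechet_derivative (dirD f u) (at X) u \<le> 0"
  proof (rule ccontr)
    assume neg: "\<not> ?thesis"
    define p where "p = (\<lambda>t::real. X + t *\<^sub>R u)"
    have dp: "(p has_derivative (\<lambda>h. h *\<^sub>R u)) (at t)" for t
      unfolding p_def by (auto intro!: derivative_eq_intros)
    define g' where "g' = frechet_derivative (dirD f u) (at X)"
    have dg: "(dirD f u has_derivative g') (at X)"
      using smooth_dirD_diff_at[OF sm X] frechet_derivative_works unfolding g'_def by blast
    define \<psi> where "\<psi> = (\<lambda>t. s * dirD f u (p t))"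
    define \<phi> where "\<phi> = (\<lambda>t. s * f (p t))"
    have dphi: "DERIV \<phi> t :> \<psi> t" if "p t \<noteq> 0" for t
    proof -
      have "((\<lambda>t. f (p t)) has_derivative (\<lambda>h. frechet_derivative f (at (p t)) (h *\<^sub>R u))) (at t)"
        using has_derivative_compose[OF dp dF[OF that]] .
      then have "((\<lambda>t. s * f (p t)) has_derivative (\<lambda>h. s * frechet_derivative f (at (p t)) (h *\<^sub>R u))) (at t)"
        by (rule has_derivative_mult_right)
      moreover have "s * frechet_derivative f (at (p t)) (h *\<^sub>R u) = h * \<psi> t" for h
        using deriv_scale[OF dF[OF that], of h u] unfolding \<psi>_def dirD_def by simp
      ultimately show ?thesis unfolding \<phi>_def
        by (intro has_derivative_imp_has_field_derivative) (auto simp: mult.commute)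
    qed
    have p0: "p 0 = X" by (simp add: p_def)
    have dpsi: "DERIV \<psi> 0 :> s * g' u"
    proof -
      have "((\<lambda>t. dirD f u (p t)) has_derivative (\<lambda>h. g' (h *\<^sub>R u))) (at 0)"
        using has_derivative_compose[OF dp, of "dirD f u" g' 0] dg p0 by simp
      then have "(\<psi> has_derivative (\<lambda>h. s * g' (h *\<^sub>R u))) (at 0)"
        unfolding \<psi>_def by (rule has_derivative_mult_right)
      moreover have "s * g' (h *\<^sub>R u) = h * (s * g' u)" for h
        using deriv_scale[OF dg, of h u] by simp
      ultimately show ?thesis
        by (intro has_derivative_imp_has_field_derivative) (auto simp: mult.commute)
    qed
    have psi0: "\<psi> 0 = 0" unfolding \<psi>_def dirD_def p0 D0 by simp
    obtain d where d: "d > 0" "\<And>h. h > 0 \<Longrightarrow> h < d \<Longrightarrow> \<psi> 0 < \<psi> (0 + h)"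
      using DERIV_pos_inc_right[OF dpsi] neg unfolding g'_def by auto
    define \<delta> where "\<delta> = norm X / (norm u + 1)"
    have "norm u + 1 > 0" by (simp add: add_nonneg_pos)
    then have \<delta>: "\<delta> > 0" using X unfolding \<delta>_def by (simp add: divide_pos_pos)
    have pnz: "p t \<noteq> 0" if "0 \<le> t" "t < \<delta>" for t
    proof
      assume "p t = 0"
      then have "X = - (t *\<^sub>R u)" by (simp add: p_def add_eq_0_iff)
      then have "norm X = t * norm u" using that by simp
      also have "\<dots> \<le> t * (norm u + 1)" using that by (simp add: mult_left_mono)
      also have "\<dots> < \<delta> * (norm u + 1)"
        using that \<open>norm u + 1 > 0\<close> by (intro mult_strict_right_mono) auto
      also have "\<dots> = norm X" unfolding \<delta>_def using \<open>norm u + 1 > 0\<close> by simp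
      finally show False by simp
    qed
    define t0 where "t0 = min (d / 2) (\<delta> / 2)"
    have t0: "t0 > 0" "t0 < d" "t0 < \<delta>" using d \<delta> by (auto simp: t0_def)
    obtain z where z: "0 < z" "z < t0" "\<phi> t0 - \<phi> 0 = (t0 - 0) * \<psi> z"
      using MVT2[OF t0(1), of \<phi> \<psi>] dphi pnz t0 by force
    have "\<psi> z > 0" using d(2)[of z] z t0 psi0 by simp
    then have "\<phi> t0 - \<phi> 0 > 0" using z t0 by simp
    moreover have "\<phi> t0 \<le> \<phi> 0" using ext[OF pnz[of t0]] t0 p0 unfolding \<phi>_def by simp
    ultimately show False by simp
  qed
qed


lemma tangent_onb:
  fixes X :: "real^'m"
  assumes X: "X \<noteq> 0" and dim: "CARD('m) = n + 1"
  obtains e :: "nat \<Rightarrow> real^'m" where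
    "\<forall>i<n. \<forall>j<n. e i \<bullet> e j = (if i = j then 1 else 0)" "\<forall>i<n. X \<bullet> e i = 0"
proof -
  define S where "S = {y::real^'m. X \<bullet> y = 0}"
  have sub: "subspace S" unfolding S_def by (rule subspace_hyperplane)
  have dS: "dim S = n" unfolding S_def using dim_hyperplane[OF X] dim by simp
  obtain B where B: "B \<subseteq> S" "pairwise orthogonal B" "\<And>x. x \<in> B \<Longrightarrow> norm x = 1"
    "independent B" "card B = dim S" "span B = S"
    using orthonormal_basis_subspace[OF sub] by blast
  have fB: "finite B" using B(4) by (rule independent_imp_finite)
  obtain h where h: "bij_betw h {0..<card B} B" using ex_bij_betw_nat_finite[OF fB] by blast
  have cB: "card B = n" using B(5) dS by simp
  show ?thesis
  proof (rule that[of h])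
    show "\<forall>i<n. \<forall>j<n. h i \<bullet> h j = (if i = j then 1 else 0)"
    proof (intro allI impI)
      fix i j assume ij: "i < n" "j < n"
      have hi: "h i \<in> B" "h j \<in> B" using h ij cB by (auto simp: bij_betw_def)
      show "h i \<bullet> h j = (if i = j then 1 else 0)"
      proof (cases "i = j")
        case True
        then show ?thesis using B(3)[OF hi(1)] by (simp add: dot_square_norm)
      next
        case False
        have "inj_on h {0..<n}" using h cB by (simp add: bij_betw_def)
        then have "h i \<noteq> h j" using inj_on_eq_iff[of h "{0..<n}" i j] ij False by simp
        then show ?thesis using B(2) hi False unfolding pairwise_def orthogonal_def by auto
      qed
    qed
    show "\<forall>i<n. X \<bullet> h i = 0"
      using h B(1) cB unfolding bij_betw_def S_def by auto
  qed
qed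

lemma esymS_const:
  assumes "finite A"
  shows "esymS A l (\<lambda>_. c) = real (card A choose l) * c ^ l"
proof -
  have "esymS A l (\<lambda>_. c) = (\<Sum>S\<in>{S. S \<subseteq> A \<and> card S = l}. c ^ l)"
    unfolding esymS_def by (intro sum.cong refl) simp
  also have "\<dots> = real (card {S. S \<subseteq> A \<and> card S = l}) * c ^ l" by simp
  also have "\<dots> = real (card A choose l) * c ^ l" using n_subsets[OF assms] by simp
  finally show ?thesis .
qed

lemma ratio_e:
  assumes "1 \<le> k" "k \<le> n"
  shows "real k * (real (n choose k) / real (n choose (k - 1))) = real n - real (k - 1)"
proof -
  obtain i where i: "k = Suc i" using assms by (cases k) auto
  have "Suc i * (n choose Suc i) = (n - i) * (n choose i)"
    using binomial_absorption[of i n] binomial_absorb_comp[of n i] by simp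
  then have "real (Suc i) * real (n choose Suc i) = real (n - i) * real (n choose i)"
    by (metis of_nat_mult)
  moreover have "real (n choose i) > 0" using assms i by simp
  ultimately show ?thesis using i assms by (simp add: field_simps of_nat_diff)
qed

lemma phi_dec:
  fixes phi :: "real \<Rightarrow> real"
  assumes d: "\<forall>t>0. \<exists>D. (phi has_real_derivative D) (at t) \<and> D < 0"
    and st: "0 < s" "s < t"
  shows "phi t < phi s"
  using DERIV_neg_imp_decreasing[OF st(2), of phi] d st by force

lemma phi_root:
  fixes phi :: "real \<Rightarrow> real"
  assumes r: "0 < r1" "r1 < r2"
    and b: "\<forall>t. 0 < t \<and> t \<le> r1 \<longrightarrow> phi t > 1"
    and c: "\<forall>t. t \<ge> r2 \<longrightarrow> phi t < 1"
    and d: "\<forall>t>0. \<exists>D. (phi has_real_derivative D) (at t) \<and> D < 0"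
  shows "\<exists>!rho0. rho0 > 0 \<and> phi rho0 = 1"
proof -
  have cont: "continuous_on {r1..r2} phi"
  proof (intro continuous_at_imp_continuous_on ballI)
    fix x assume "x \<in> {r1..r2}"
    then have "x > 0" using r by auto
    then obtain D where "(phi has_real_derivative D) (at x)" using d by blast
    then show "isCont phi x" by (rule DERIV_isCont)
  qed
  obtain x where x: "r1 \<le> x" "x \<le> r2" "phi x = 1"
    using IVT2'[of phi r2 1 r1, OF _ _ _ cont] b c r by force
  show ?thesis
  proof (rule ex1I[of _ x])
    show "x > 0 \<and> phi x = 1" using x r by simp
    fix y assume y: "y > 0 \<and> phi y = 1"
    show "y = x"
    proof (rule ccontr)
      assume "y \<noteq> x"
      then have "y < x \<or> x < y" by arith
      then show False using phi_dec[OF d, of y x] phi_dec[OF d, of x y] x y r by auto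
    qed
  qed
qed

lemma radial_sphere:
  fixes x :: "real^'m"
  assumes "x \<in> sphere 0 1"
  shows "radial_ext rho x = rho x"
  using assms by (simp add: radial_ext_def)

lemma radial_scale:
  fixes x :: "real^'m"
  assumes "x \<in> sphere 0 1" "c > 0"
  shows "radial_ext rho (c *\<^sub>R x) = rho x"
  using assms by (simp add: radial_ext_def)

lemma normalize_sphere:
  fixes y :: "real^'m"
  assumes "y \<noteq> 0"
  shows "y /\<^sub>R norm y \<in> sphere 0 1"
  using assms by simp

lemma const_smooth: "smooth_on S (\<lambda>_. c)"
proof -
  have "\<exists>c'. iter_dirD (\<lambda>_. c) us = (\<lambda>_. c')" for us :: "'a list"
  proof (induction us)
    case Nil
    then show ?case by auto
  next
    case (Cons u us)
    then obtain c' where "iter_dirD (\<lambda>_. c) us = (\<lambda>_. c')" by blast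
    then show ?case by (auto simp: dirD_def)
  qed
  then show ?thesis unfolding smooth_on_def by (metis differentiable_on_const)
qed

lemma const_admissible:
  assumes "rho0 > 0"
  shows "admissible_radial (\<lambda>_::real^'m. rho0)"
  using assms const_smooth unfolding admissible_radial_def radial_ext_def by simp

lemma const_solves:
  fixes rho :: "real^'m \<Rightarrow> real"
  assumes dim: "CARD('m) = n + 1" and k: "2 \<le> k" "k \<le> n"
    and adm: "admissible_radial rho" and cst: "\<forall>x\<in>sphere 0 1. rho x = rho0"
    and r0: "rho0 > 0" and p0: "phi rho0 = 1"
  shows "solves_eq n k phi rho"
  unfolding solves_eq_def
proof
  fix X assume "X \<in> star_hypersurface rho"
  then obtain x where x: "x \<in> sphere 0 1" "X = rho x *\<^sub>R x" unfolding star_hypersurface_def by auto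
  have X: "X = rho0 *\<^sub>R x" using x cst by simp
  have nX: "norm X = rho0" unfolding X using x r0 by simp
  have X0: "X \<noteq> 0" using nX r0 by auto
  define R where "R = radial_ext rho"
  have Rc: "R y = rho0" if "y \<noteq> 0" for y
    using cst normalize_sphere[OF that] unfolding R_def radial_ext_def by simp
  have dRc: "(R has_derivative (\<lambda>h. 0)) (at y)" if "y \<noteq> 0" for y
    by (rule has_derivative_transform_within_open[OF has_derivative_const[of rho0], of "- {0}"])
      (use that Rc in auto)
  have fR: "frechet_derivative R (at y) = (\<lambda>h. 0)" if "y \<noteq> 0" for y
    using frechet_derivative_at[OF dRc[OF that]] by simp
  have dirR: "dirD R u y = 0" if "y \<noteq> 0" for u y
    unfolding dirD_def using fR[OF that] by simp
  have D2: "frechet_derivative (dirD R u) (at X) = (\<lambda>h. 0)" for u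
  proof -
    have "(dirD R u has_derivative (\<lambda>h. 0)) (at X)"
      by (rule has_derivative_transform_within_open[OF has_derivative_const[of 0], of "- {0}"])
        (use X0 dirR in auto)
    then show ?thesis using frechet_derivative_at by metis
  qed
  have sm: "smooth_on (- {0}) (radial_ext rho)" using adm by (simp add: admissible_radial_def)
  note F = sff_formula[OF sm X0 fR[OF X0, unfolded R_def]]
  obtain e where e: "\<forall>i<n. \<forall>j<n. e i \<bullet> e j = (if i = j then 1 else 0)" "\<forall>i<n. X \<bullet> e i = 0"
    using tangent_onb[OF X0 dim] by blast
  define \<kappa> where "\<kappa> = (\<lambda>_::nat. 1 / rho0)"
  have pc: "principal_curvatures n rho X \<kappa>"
    unfolding principal_curvatures_def
  proof (intro exI[of _ e] conjI allI impI)
    fix i j assume ij: "i < n" "j < n"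
    show "e i \<bullet> e j = (if i = j then 1 else 0)" using e ij by blast
    show "second_ff (level_fun rho) X (e i) (e j) = (if i = j then \<kappa> i else 0)"
      using F(3)[of "e i" "e j"] e ij D2[of "e i", unfolded R_def] nX by (simp add: \<kappa>_def)
  next
    fix i assume "i < n"
    then show "frechet_derivative (level_fun rho) (at X) (e i) = 0" using F(1) e by simp
  qed
  have es: "esym n j \<kappa> = real (n choose j) * (1 / rho0) ^ j" for j
    unfolding esym_esymS \<kappa>_def using esymS_const[of "{..<n}" j] by simp
  have es1: "esym n j (\<lambda>_. 1) = real (n choose j)" for j
    unfolding esym_esymS using esymS_const[of "{..<n}" j 1] by simp
  have G: "\<kappa> \<in> Gamma_cone n (k - 1)"
    unfolding Gamma_cone_def using k r0 by (auto simp: es)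
  have "esym n k \<kappa> / esym n (k - 1) \<kappa> = real (n choose k) / real (n choose (k - 1)) * (1 / rho0)"
  proof -
    have "(1 / rho0) ^ k = (1 / rho0) ^ (k - 1) * (1 / rho0)" using k
      by (metis Suc_diff_1 le_trans one_le_numeral not_one_le_zero not_less power_Suc2 zero_less_iff_neq_zero)
    moreover have "real (n choose (k - 1)) > 0" using k by simp
    moreover have "(1 / rho0) ^ (k - 1) > 0" using r0 by simp
    ultimately show ?thesis unfolding es by (simp add: field_simps)
  qed
  then have "esym n k \<kappa> / esym n (k - 1) \<kappa>
      - phi (norm X) * (esym n k (\<lambda>_. 1) / esym n (k - 1) (\<lambda>_. 1)) * (1 / norm X) = 0"
    unfolding es1 nX p0 by simp
  then show "\<exists>\<kappa>. principal_curvatures n rho X \<kappa> \<and> \<kappa> \<in> Gamma_cone n (k - 1) \<and>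
        esym n k \<kappa> / esym n (k - 1) \<kappa>
          - phi (norm X) * (esym n k (\<lambda>_. 1) / esym n (k - 1) (\<lambda>_. 1)) * (1 / norm X) = 0"
    using pc G by blast
qed


lemma extremal:
  fixes rho :: "real^'m \<Rightarrow> real"
  assumes adm: "admissible_radial rho" and sol: "solves_eq n k phi rho"
    and x: "x \<in> sphere 0 1" and s0: "s \<noteq> 0"
    and ext: "\<forall>y\<in>sphere 0 1. s * rho y \<le> s * rho x"
  shows "\<exists>\<kappa>. (\<forall>i<n. s * \<kappa> i \<ge> s / rho x) \<and> \<kappa> \<in> Gamma_cone n (k - 1) \<and>
        esym n k \<kappa> / esym n (k - 1) \<kappa>
          - phi (rho x) * (esym n k (\<lambda>_. 1) / esym n (k - 1) (\<lambda>_. 1)) * (1 / rho x) = 0"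
proof -
  have pos: "rho x > 0" using adm x by (simp add: admissible_radial_def)
  define X where "X = rho x *\<^sub>R x"
  have XM: "X \<in> star_hypersurface rho" unfolding X_def star_hypersurface_def using x by auto
  have nX: "norm X = rho x" using x pos by (simp add: X_def)
  have X0: "X \<noteq> 0" using nX pos by auto
  define R where "R = radial_ext rho"
  have sm: "smooth_on (- {0}) R" using adm by (simp add: admissible_radial_def R_def)
  have RX: "R X = rho x" unfolding R_def X_def using radial_scale[OF x pos] .
  have ext': "\<And>y. y \<noteq> 0 \<Longrightarrow> s * R y \<le> s * R X"
    using ext normalize_sphere RX unfolding R_def radial_ext_def by simp
  note SO = second_order[OF sm X0 s0 ext']
  note F = sff_formula[OF sm[unfolded R_def] X0 SO(1)[unfolded R_def]]
  obtain \<kappa> where pc: "principal_curvatures n rho X \<kappa>" and G: "\<kappa> \<in> Gamma_cone n (k - 1)"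
    and eq: "esym n k \<kappa> / esym n (k - 1) \<kappa>
          - phi (norm X) * (esym n k (\<lambda>_. 1) / esym n (k - 1) (\<lambda>_. 1)) * (1 / norm X) = 0"
    using sol XM unfolding solves_eq_def by blast
  obtain e where e: "\<forall>i<n. \<forall>j<n. e i \<bullet> e j = (if i = j then 1 else 0)"
      "\<forall>i<n. frechet_derivative (level_fun rho) (at X) (e i) = 0"
      "\<forall>i<n. \<forall>j<n. second_ff (level_fun rho) X (e i) (e j) = (if i = j then \<kappa> i else 0)"
    using pc unfolding principal_curvatures_def by blast
  have "s * \<kappa> i \<ge> s / rho x" if i: "i < n" for i
  proof -
    have "X \<bullet> e i / norm X = 0" using e(2) i F(1) by simp
    then have t: "X \<bullet> e i = 0" using X0 by simp
    have "\<kappa> i = second_ff (level_fun rho) X (e i) (e i)" using e(3) i by simp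
    also have "\<dots> = 1 / rho x - frechet_derivative (dirD R (e i)) (at X) (e i)"
    proof -
      have "second_ff (level_fun rho) X (e i) (e i) = e i \<bullet> e i / norm X - frechet_derivative (dirD (radial_ext rho) (e i)) (at X) (e i)"
        by (rule F(3)) (simp_all add: t)
      then show ?thesis using e(1) i nX by (simp add: R_def)
    qed
    finally have k1: "\<kappa> i = 1 / rho x - frechet_derivative (dirD R (e i)) (at X) (e i)" .
    have "s * \<kappa> i = s * (1 / rho x) - s * frechet_derivative (dirD R (e i)) (at X) (e i)"
      unfolding k1 by (rule right_diff_distrib)
    then show ?thesis using SO(2)[of "e i"] by simp
  qed
  then show ?thesis using G eq nX by auto
qed

lemma ext_phi_ge:
  assumes k: "2 \<le> k" "k \<le> n" and c: "c > 0" and ph: "ph > 0"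
    and ge: "\<forall>i<n. \<kappa> i \<ge> c" and G: "\<kappa> \<in> Gamma_cone n (k - 1)"
    and eq: "esym n k \<kappa> / esym n (k - 1) \<kappa>
          - ph * (esym n k (\<lambda>_. 1) / esym n (k - 1) (\<lambda>_. 1)) * c = 0"
  shows "ph \<ge> 1"
proof -
  have es1: "esym n j (\<lambda>_. 1) = real (n choose j)" for j
    unfolding esym_esymS using esymS_const[of "{..<n}" j 1] by simp
  define Re where "Re = real (n choose k) / real (n choose (k - 1))"
  have kR: "real k * Re = real n - real (k - 1)" unfolding Re_def using ratio_e k by simp
  have sp: "esym n (k - 1) \<kappa> > 0" using G k unfolding Gamma_cone_def by auto
  have sk: "esym n k \<kappa> = ph * Re * c * esym n (k - 1) \<kappa>"
    using eq sp unfolding es1 Re_def by (simp add: field_simps)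
  have M: "real k * esymS {..<n} k \<kappa> \<ge> c * ((real (card {..<n}) - real (k - 1)) * esymS {..<n} (k - 1) \<kappa>)"
    using max_ineq[of "{..<n}" k c \<kappa>] k c ge by simp
  then have H: "real k * (ph * Re * c * esym n (k - 1) \<kappa>) \<ge> c * ((real n - real (k - 1)) * esym n (k - 1) \<kappa>)"
    using sk by (simp add: esym_esymS)
  have "ph * (c * esym n (k - 1) \<kappa> * (real n - real (k - 1))) \<ge> 1 * (c * esym n (k - 1) \<kappa> * (real n - real (k - 1)))"
  proof -
    have e1: "ph * (c * esym n (k - 1) \<kappa> * (real n - real (k - 1))) = real k * (ph * Re * c * esym n (k - 1) \<kappa>)"
      unfolding kR[symmetric] by (simp add: algebra_simps)
    have e2: "1 * (c * esym n (k - 1) \<kappa> * (real n - real (k - 1))) = c * ((real n - real (k - 1)) * esym n (k - 1) \<kappa>)"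
      by (simp add: algebra_simps)
    show ?thesis unfolding e1 e2 using H by simp
  qed
  moreover have "c * esym n (k - 1) \<kappa> * (real n - real (k - 1)) > 0" using c sp k by simp
  ultimately show ?thesis by (meson mult_le_cancel_right_pos)
qed

lemma ext_phi_le:
  assumes k: "2 \<le> k" "k \<le> n" and c: "c > 0" and ph: "ph > 0"
    and le: "\<forall>i<n. \<kappa> i \<le> c" and G: "\<kappa> \<in> Gamma_cone n (k - 1)"
    and eq: "esym n k \<kappa> / esym n (k - 1) \<kappa>
          - ph * (esym n k (\<lambda>_. 1) / esym n (k - 1) (\<lambda>_. 1)) * c = 0"
  shows "ph \<le> 1"
proof -
  have es1: "esym n j (\<lambda>_. 1) = real (n choose j)" for j
    unfolding esym_esymS using esymS_const[of "{..<n}" j 1] by simp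
  define Re where "Re = real (n choose k) / real (n choose (k - 1))"
  have kR: "real k * Re = real n - real (k - 1)" unfolding Re_def using ratio_e k by simp
  have Rp: "Re > 0" unfolding Re_def using k by simp
  have sp: "esym n (k - 1) \<kappa> > 0" using G k unfolding Gamma_cone_def by auto
  have sk: "esym n k \<kappa> = ph * Re * c * esym n (k - 1) \<kappa>"
    using eq sp unfolding es1 Re_def by (simp add: field_simps)
  have skp: "esym n k \<kappa> > 0" unfolding sk using ph Rp c sp by simp
  have GG: "\<forall>j. 1 \<le> j \<and> j \<le> k \<longrightarrow> esymS {..<n} j \<kappa> > 0"
  proof (intro allI impI)
    fix j assume j: "1 \<le> j \<and> j \<le> k"
    show "esymS {..<n} j \<kappa> > 0"
    proof (cases "j = k")
      case True then show ?thesis using skp by (simp add: esym_esymS)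
    next
      case False
      then have "j \<in> {1..k - 1}" using j by auto
      then show ?thesis using G unfolding Gamma_cone_def by (simp add: esym_esymS)
    qed
  qed
  have M: "real k * esymS {..<n} k \<kappa> \<le> c * ((real (card {..<n}) - real (k - 1)) * esymS {..<n} (k - 1) \<kappa>)"
    using min_ineq[of "{..<n}" k \<kappa> c] k GG le by simp
  then have H: "real k * (ph * Re * c * esym n (k - 1) \<kappa>) \<le> c * ((real n - real (k - 1)) * esym n (k - 1) \<kappa>)"
    using sk by (simp add: esym_esymS)
  have "ph * (c * esym n (k - 1) \<kappa> * (real n - real (k - 1))) \<le> 1 * (c * esym n (k - 1) \<kappa> * (real n - real (k - 1)))"
  proof -
    have e1: "ph * (c * esym n (k - 1) \<kappa> * (real n - real (k - 1))) = real k * (ph * Re * c * esym n (k - 1) \<kappa>)"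
      unfolding kR[symmetric] by (simp add: algebra_simps)
    have e2: "1 * (c * esym n (k - 1) \<kappa> * (real n - real (k - 1))) = c * ((real n - real (k - 1)) * esym n (k - 1) \<kappa>)"
      by (simp add: algebra_simps)
    show ?thesis unfolding e1 e2 using H by simp
  qed
  moreover have "c * esym n (k - 1) \<kappa> * (real n - real (k - 1)) > 0" using c sp k by simp
  ultimately show ?thesis by (meson mult_le_cancel_right_pos)
qed


lemma star_const:
  fixes rho :: "real^'m \<Rightarrow> real"
  assumes r0: "rho0 > 0" and cst: "\<forall>x\<in>sphere 0 1. rho x = rho0"
  shows "star_hypersurface rho = sphere 0 rho0"
proof
  show "star_hypersurface rho \<subseteq> sphere 0 rho0"
    unfolding star_hypersurface_def using cst r0 by auto
  show "sphere 0 rho0 \<subseteq> star_hypersurface rho"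
  proof
    fix y :: "real^'m" assume y: "y \<in> sphere 0 rho0"
    then have ny: "norm y = rho0" by simp
    define x where "x = y /\<^sub>R rho0"
    have x: "x \<in> sphere 0 1" using ny r0 by (simp add: x_def)
    have "y = rho x *\<^sub>R x" using cst x r0 by (simp add: x_def)
    then show "y \<in> star_hypersurface rho" unfolding star_hypersurface_def using x by blast
  qed
qed

lemma sphere_star_const:
  fixes rho :: "real^'m \<Rightarrow> real"
  assumes adm: "admissible_radial rho" and st: "star_hypersurface rho = sphere 0 rho0"
  shows "\<forall>x\<in>sphere 0 1. rho x = rho0"
proof
  fix x :: "real^'m" assume x: "x \<in> sphere 0 1"
  then have "rho x *\<^sub>R x \<in> sphere 0 rho0" using st unfolding star_hypersurface_def by blast
  moreover have "rho x > 0" using adm x by (simp add: admissible_radial_def)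
  ultimately show "rho x = rho0" using x by simp
qed

lemma rho_cont:
  fixes rho :: "real^'m \<Rightarrow> real"
  assumes adm: "admissible_radial rho"
  shows "continuous_on (sphere 0 1) rho"
proof -
  have "iter_dirD (radial_ext rho) [] differentiable_on (- {0})"
    using adm unfolding admissible_radial_def smooth_on_def by blast
  then have "continuous_on (- {0}) (radial_ext rho)"
    by (simp add: differentiable_imp_continuous_on)
  then have "continuous_on (sphere 0 1) (radial_ext rho)"
    by (rule continuous_on_subset) auto
  then show ?thesis
    by (rule continuous_on_eq) (simp add: radial_sphere)
qed

lemma rho_const_of_solves:
  fixes rho :: "real^'m \<Rightarrow> real" and phi :: "real \<Rightarrow> real"
  assumes k2: "2 \<le> k" and kn: "k \<le> n"
    and a: "\<forall>t>0. phi t > 0"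
    and d: "\<forall>t>0. \<exists>D. (phi has_real_derivative D) (at t) \<and> D < 0"
    and adm: "admissible_radial rho" and sol: "solves_eq n k phi rho"
    and r0: "rho0 > 0" "phi rho0 = 1"
  shows "\<forall>x\<in>sphere 0 1. rho x = rho0"
proof -
  have ne: "sphere (0::real^'m) 1 \<noteq> {}" using norm_axis_1[of undefined] by (metis mem_sphere_0 empty_iff)
  have cpt: "compact (sphere (0::real^'m) 1)" by simp
  have pos: "rho x > 0" if "x \<in> sphere 0 1" for x using adm that by (simp add: admissible_radial_def)
  obtain xM where xM: "xM \<in> sphere 0 1" "\<forall>y\<in>sphere 0 1. rho y \<le> rho xM"
    using continuous_attains_sup[OF cpt ne rho_cont[OF adm]] by blast
  obtain xm where xm: "xm \<in> sphere 0 1" "\<forall>y\<in>sphere 0 1. rho xm \<le> rho y"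
    using continuous_attains_inf[OF cpt ne rho_cont[OF adm]] by blast
  obtain \<kappa>1 where K1: "\<forall>i<n. 1 * \<kappa>1 i \<ge> 1 / rho xM" "\<kappa>1 \<in> Gamma_cone n (k - 1)"
      "esym n k \<kappa>1 / esym n (k - 1) \<kappa>1
          - phi (rho xM) * (esym n k (\<lambda>_. 1) / esym n (k - 1) (\<lambda>_. 1)) * (1 / rho xM) = 0"
    using extremal[OF adm sol xM(1), of 1] xM(2) by auto
  have geM: "phi (rho xM) \<ge> 1"
    by (rule ext_phi_ge[OF k2 kn _ _ _ K1(2) K1(3)]) (use K1(1) pos[OF xM(1)] a in auto)
  obtain \<kappa>2 where K2: "\<forall>i<n. (-1) * \<kappa>2 i \<ge> (-1) / rho xm" "\<kappa>2 \<in> Gamma_cone n (k - 1)"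
      "esym n k \<kappa>2 / esym n (k - 1) \<kappa>2
          - phi (rho xm) * (esym n k (\<lambda>_. 1) / esym n (k - 1) (\<lambda>_. 1)) * (1 / rho xm) = 0"
    using extremal[OF adm sol xm(1), of "-1"] xm(2) by auto
  have leM: "phi (rho xm) \<le> 1"
    by (rule ext_phi_le[OF k2 kn _ _ _ K2(2) K2(3)]) (use K2(1) pos[OF xm(1)] a in auto)
  have "rho xM \<le> rho0"
  proof (rule ccontr)
    assume "\<not> ?thesis"
    then have "phi (rho xM) < phi rho0" using phi_dec[OF d, of rho0 "rho xM"] r0 by simp
    then show False using geM r0 by simp
  qed
  moreover have "rho xm \<ge> rho0"
  proof (rule ccontr)
    assume "\<not> ?thesis"
    then have "phi rho0 < phi (rho xm)" using phi_dec[OF d, of "rho xm" rho0] pos[OF xm(1)] by simp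
    then show False using leM r0 by simp
  qed
  ultimately show ?thesis using xM xm by force
qed

theorem proposition3p2:
  fixes phi :: "real \<Rightarrow> real" and n k :: nat and r1 r2 :: real
  assumes dim: "CARD('m) = n + 1"
    and n3: "n \<ge> 3" and k2: "2 \<le> k" and kn: "k \<le> n"
    and r: "0 < r1" "r1 < r2"
    and a: "\<forall>t>0. phi t > 0"
    and b: "\<forall>t. 0 < t \<and> t \<le> r1 \<longrightarrow> phi t > 1"
    and c: "\<forall>t. t \<ge> r2 \<longrightarrow> phi t < 1"
    and d: "\<forall>t>0. \<exists>D. (phi has_real_derivative D) (at t) \<and> D < 0"
  shows "(\<exists>!rho0. rho0 > 0 \<and> phi rho0 = 1)
    \<and> (\<forall>rho0. rho0 > 0 \<and> phi rho0 = 1 \<longrightarrow>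
          (\<exists>rho :: real^'m \<Rightarrow> real. admissible_radial rho \<and> solves_eq n k phi rho)
        \<and> (\<forall>rho :: real^'m \<Rightarrow> real. admissible_radial rho \<longrightarrow>
             (solves_eq n k phi rho \<longleftrightarrow> star_hypersurface rho = sphere 0 rho0)))"
proof (intro conjI allI impI)
  show "\<exists>!rho0. rho0 > 0 \<and> phi rho0 = 1" by (rule phi_root[OF r b c d])
next
  fix rho0 :: real assume r0: "rho0 > 0 \<and> phi rho0 = 1"
  show "\<exists>rho :: real^'m \<Rightarrow> real. admissible_radial rho \<and> solves_eq n k phi rho"
  proof (intro exI conjI)
    show "admissible_radial (\<lambda>_::real^'m. rho0)" using const_admissible r0 by blast
    show "solves_eq n k phi (\<lambda>_::real^'m. rho0)"
      using const_solves[OF dim k2 kn const_admissible, of rho0 rho0 phi] r0 by simp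
  qed
next
  fix rho0 :: real and rho :: "real^'m \<Rightarrow> real"
  assume r0: "rho0 > 0 \<and> phi rho0 = 1" and adm: "admissible_radial rho"
  show "solves_eq n k phi rho \<longleftrightarrow> star_hypersurface rho = sphere 0 rho0"
  proof
    assume sol: "solves_eq n k phi rho"
    have "\<forall>x\<in>sphere 0 1. rho x = rho0"
      using rho_const_of_solves[OF k2 kn a d adm sol] r0 by blast
    then show "star_hypersurface rho = sphere 0 rho0" using star_const r0 by blast
  next
    assume "star_hypersurface rho = sphere 0 rho0"
    then have "\<forall>x\<in>sphere 0 1. rho x = rho0" using sphere_star_const[OF adm] by blast
    then show "solves_eq n k phi rho" using const_solves[OF dim k2 kn adm] r0 by blast
  qed
qed

end
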